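(* A poset $(\Lambda,\le)$ is interval-finite and good if and only if every finitely generated ideal $\Gamma\subseteq\Lambda$ has a descending chain of finitely generated subideals $\Gamma=\Gamma_0\supseteq\Gamma_1\supseteq\Gamma_2\supseteq\cdots$ such that $|\Gamma_k\setminus\Gamma_{k+1}|<\infty$ for every $k\ge0$ and $\bigcap_{k\ge0}\Gamma_k=\emptyset$. Moreover, this chain can be chosen so that for each $k\ge0$ the elements of $\Gamma_k\setminus\Gamma_{k+1}$ are pairwise incomparable generators of $\Gamma_k$.
   Context: For a poset, $(\gamma]=\{\mu\mid\mu\le\gamma\}$; an ideal is a downward closed subset, finitely generated if it is $\bigcup_{i=1}^t(\lambda_i]$ for finitely many $\lambda_i$; a generator of an ideal $\Gamma$ is an element of a generating set. Interval-finite means every closed interval $[\mu,\lambda]$ is finite. An element $\mu$ is a predecessor of $\lambda$ if $\mu<\lambda$ and there is no $\pi$ with $\mu<\pi<\lambda$. A poset is good if (1) each non-minimal element has at least one but only finitely many predecessors, and (2) whenever $\mu<\lambda$ there is a predecessor $\lambda'$ of $\lambda$ with $\mu\le\lambda'$. *)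

theory Defs
  imports Main
begin

definition down :: "'a::order set \<Rightarrow> 'a \<Rightarrow> 'a set" where
  "down L g = {m \<in> L. m \<le> g}"

definition is_ideal :: "'a::order set \<Rightarrow> 'a set \<Rightarrow> bool" where
  "is_ideal L G \<longleftrightarrow> G \<subseteq> L \<and> (\<forall>x\<in>G. \<forall>y\<in>L. y \<le> x \<longrightarrow> y \<in> G)"

definition generates :: "'a::order set \<Rightarrow> 'a set \<Rightarrow> 'a set \<Rightarrow> bool" where
  "generates L S G \<longleftrightarrow> finite S \<and> S \<subseteq> L \<and> G = (\<Union>g\<in>S. down L g)"

definition fin_gen_ideal :: "'a::order set \<Rightarrow> 'a set \<Rightarrow> bool" where
  "fin_gen_ideal L G \<longleftrightarrow> is_ideal L G \<and> (\<exists>S. generates L S G)"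

definition is_generator :: "'a::order set \<Rightarrow> 'a set \<Rightarrow> 'a \<Rightarrow> bool" where
  "is_generator L G x \<longleftrightarrow> (\<exists>S. generates L S G \<and> x \<in> S)"

definition interval_finite :: "'a::order set \<Rightarrow> bool" where
  "interval_finite L \<longleftrightarrow> (\<forall>m\<in>L. \<forall>l\<in>L. finite {p \<in> L. m \<le> p \<and> p \<le> l})"

definition is_pred :: "'a::order set \<Rightarrow> 'a \<Rightarrow> 'a \<Rightarrow> bool" where
  "is_pred L m l \<longleftrightarrow> m \<in> L \<and> l \<in> L \<and> m < l \<and> \<not> (\<exists>p\<in>L. m < p \<and> p < l)"

definition good :: "'a::order set \<Rightarrow> bool" where
  "good L \<longleftrightarrow>
     (\<forall>l\<in>L. (\<exists>m\<in>L. m < l) \<longrightarrow> (\<exists>m. is_pred L m l) \<and> finite {m. is_pred L m l}) \<and>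
     (\<forall>m\<in>L. \<forall>l\<in>L. m < l \<longrightarrow> (\<exists>l'. is_pred L l' l \<and> m \<le> l'))"

definition exhausting_chain :: "'a::order set \<Rightarrow> 'a set \<Rightarrow> (nat \<Rightarrow> 'a set) \<Rightarrow> bool" where
  "exhausting_chain L G \<Gamma> \<longleftrightarrow>
     \<Gamma> 0 = G \<and>
     (\<forall>k. fin_gen_ideal L (\<Gamma> k) \<and> \<Gamma> (Suc k) \<subseteq> \<Gamma> k \<and> finite (\<Gamma> k - \<Gamma> (Suc k))) \<and>
     (\<Inter>k. \<Gamma> k) = {}"

end

theory Submission
  imports Defs
begin

definition maxel :: "'a::order set \<Rightarrow> 'a set" where
  "maxel A = {x\<in>A. \<not>(\<exists>y\<in>A. x < y)}"

lemma union_down_ideal: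
  assumes "P \<subseteq> L" shows "is_ideal L (\<Union>p\<in>P. down L p)"
  unfolding is_ideal_def down_def by (auto intro: order_trans)

lemma union_down_fg:
  assumes "finite P" "P \<subseteq> L" shows "fin_gen_ideal L (\<Union>p\<in>P. down L p)"
  unfolding fin_gen_ideal_def generates_def using assms union_down_ideal by blast

lemma maxel_props:
  fixes A :: "'a::order set"
  assumes "fin_gen_ideal L A"
  shows "finite (maxel A)" "maxel A \<subseteq> L" "\<And>x. x \<in> A \<Longrightarrow> \<exists>m\<in>maxel A. x \<le> m"
    "A = (\<Union>m\<in>maxel A. down L m)" "A \<subseteq> L" "maxel A \<subseteq> A"
proof -
  obtain S where S: "finite S" "S \<subseteq> L" "A = (\<Union>g\<in>S. down L g)"
    using assms unfolding fin_gen_ideal_def generates_def by blast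
  have AL: "A \<subseteq> L" using S(3) unfolding down_def by auto
  show "A \<subseteq> L" by (fact AL)
  have SA: "S \<subseteq> A" using S unfolding down_def by auto
  have sub: "maxel A \<subseteq> S"
  proof
    fix x assume x: "x \<in> maxel A"
    then have "x \<in> A" unfolding maxel_def by auto
    then obtain s where "s \<in> S" "x \<le> s" using S(3) unfolding down_def by auto
    have sA: "s \<in> A" using \<open>s \<in> S\<close> SA by blast
    have "\<not> x < s" using x sA unfolding maxel_def by blast
    then have "x = s" using \<open>x \<le> s\<close> by (simp add: order_less_le)
    then show "x \<in> S" using \<open>s \<in> S\<close> by simp
  qed
  show "finite (maxel A)" using sub S(1) finite_subset by blast
  show "maxel A \<subseteq> L" using sub S(2) by blast
  show "maxel A \<subseteq> A" unfolding maxel_def by auto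
  show ab: "\<And>x. x \<in> A \<Longrightarrow> \<exists>m\<in>maxel A. x \<le> m"
  proof -
    fix x assume "x \<in> A"
    then obtain s where s: "s \<in> S" "x \<le> s" using S(3) unfolding down_def by auto
    obtain m where m: "m \<in> S" "s \<le> m" "\<forall>b\<in>S. m \<le> b \<longrightarrow> m = b"
      using finite_has_maximal2[OF S(1) s(1)] by blast
    have "m \<in> maxel A"
    proof -
      have "\<not>(\<exists>y\<in>A. m < y)"
      proof
        assume "\<exists>y\<in>A. m < y"
        then obtain y where "y \<in> A" "m < y" by blast
        then obtain s' where "s' \<in> S" "y \<le> s'" using S(3) unfolding down_def by auto
        have "m < s'" using \<open>m < y\<close> \<open>y \<le> s'\<close> by (rule order_less_le_trans)
        then have "m \<le> s'" "m \<noteq> s'" by auto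
        then show False using m(3) \<open>s' \<in> S\<close> by blast
      qed
      then show ?thesis using m(1) SA unfolding maxel_def by auto
    qed
    then show "\<exists>m\<in>maxel A. x \<le> m" using s m by (meson order_trans)
  qed
  show "A = (\<Union>m\<in>maxel A. down L m)"
  proof
    show "A \<subseteq> (\<Union>m\<in>maxel A. down L m)"
    proof
      fix x assume x: "x \<in> A"
      then obtain m where "m \<in> maxel A" "x \<le> m" using ab by blast
      moreover have "x \<in> L" using x AL by blast
      ultimately show "x \<in> (\<Union>m\<in>maxel A. down L m)" unfolding down_def by blast
    qed
    show "(\<Union>m\<in>maxel A. down L m) \<subseteq> A"
    proof
      fix y assume "y \<in> (\<Union>m\<in>maxel A. down L m)"
      then obtain m where "m \<in> maxel A" "y \<in> L" "y \<le> m" unfolding down_def by blast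
      moreover have "m \<in> A" using \<open>m \<in> maxel A\<close> unfolding maxel_def by blast
      ultimately show "y \<in> A" using assms unfolding fin_gen_ideal_def is_ideal_def by blast
    qed
  qed
qed

lemma finite_preds:
  assumes "good L" "l \<in> L" shows "finite {m. is_pred L m l}"
proof (cases "\<exists>m\<in>L. m < l")
  case True then show ?thesis using assms unfolding good_def by blast
next
  case False then have "{m. is_pred L m l} = {}" unfolding is_pred_def by auto
  then show ?thesis by simp
qed

lemma step_fg:
  fixes A :: "'a::order set"
  assumes g: "good L" and A: "fin_gen_ideal L A"
  shows "fin_gen_ideal L (A - maxel A)"
proof -
  note mp = maxel_props[OF A]
  define P where "P = (\<Union>s\<in>maxel A. {m. is_pred L m s})"
  have fP: "finite P" unfolding P_def using mp(1,2) finite_preds[OF g] by blast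
  have PL: "P \<subseteq> L" unfolding P_def is_pred_def by auto
  have eq: "A - maxel A = (\<Union>p\<in>P. down L p)"
  proof
    show "A - maxel A \<subseteq> (\<Union>p\<in>P. down L p)"
    proof
      fix x assume x: "x \<in> A - maxel A"
      then obtain s where s: "s \<in> maxel A" "x \<le> s" using mp(3) by blast
      then have "x < s" using x by (metis DiffD2 order_less_le)
      moreover have "x \<in> L" "s \<in> L" using x s mp(2,5) by auto
      ultimately obtain l' where "is_pred L l' s" "x \<le> l'" using g unfolding good_def by blast
      then show "x \<in> (\<Union>p\<in>P. down L p)" unfolding P_def down_def using s \<open>x \<in> L\<close> by blast
    qed
    show "(\<Union>p\<in>P. down L p) \<subseteq> A - maxel A"
    proof
      fix y assume "y \<in> (\<Union>p\<in>P. down L p)"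
      then obtain p s where ps: "s \<in> maxel A" "is_pred L p s" "y \<in> L" "y \<le> p"
        unfolding P_def down_def by blast
      then have ys: "y < s" unfolding is_pred_def by (meson order_le_less_trans)
      have "s \<in> A" using ps(1) mp(6) by blast
      then have "y \<in> A" using ps(3) ys A unfolding fin_gen_ideal_def is_ideal_def by (meson order_less_imp_le)
      moreover have "y \<notin> maxel A" using ys \<open>s \<in> A\<close> unfolding maxel_def by blast
      ultimately show "y \<in> A - maxel A" by blast
    qed
  qed
  show ?thesis unfolding eq using union_down_fg[OF fP PL] .
qed

lemma forward:
  fixes L :: "'a::order set"
  assumes ifin: "interval_finite L" and g: "good L" and G: "fin_gen_ideal L G"
  shows "\<exists>\<Gamma>. exhausting_chain L G \<Gamma> \<and>
                (\<forall>k. (\<forall>x\<in>\<Gamma> k - \<Gamma> (Suc k). is_generator L (\<Gamma> k) x) \<and>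
                     (\<forall>x\<in>\<Gamma> k - \<Gamma> (Suc k). \<forall>y\<in>\<Gamma> k - \<Gamma> (Suc k).
                          x \<le> y \<longrightarrow> x = y))"
proof -
  define f where "f = (\<lambda>A::'a set. A - maxel A)"
  define \<Gamma> where "\<Gamma> k = (f ^^ k) G" for k
  have G0: "\<Gamma> 0 = G" unfolding \<Gamma>_def by simp
  have GS: "\<Gamma> (Suc k) = \<Gamma> k - maxel (\<Gamma> k)" for k unfolding \<Gamma>_def f_def by simp
  have fg: "fin_gen_ideal L (\<Gamma> k)" for k
    by (induction k) (use G step_fg[OF g] GS G0 in auto)
  have diff: "\<Gamma> k - \<Gamma> (Suc k) = maxel (\<Gamma> k)" for k
    using GS[of k] maxel_props(6)[OF fg[of k]] by auto
  have dec: "\<Gamma> k \<subseteq> G" for k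
    by (induction k) (use G0 GS in auto)
  have inter: "(\<Inter>k. \<Gamma> k) = {}"
  proof (rule ccontr)
    assume "(\<Inter>k. \<Gamma> k) \<noteq> {}"
    then obtain x where x: "\<And>k. x \<in> \<Gamma> k" by blast
    obtain S where S: "finite S" "S \<subseteq> L" "G = (\<Union>g\<in>S. down L g)"
      using G unfolding fin_gen_ideal_def generates_def by blast
    have xL: "x \<in> L" using x[of 0] G0 maxel_props(5)[OF G] by auto
    define F where "F = {y\<in>G. x \<le> y}"
    have "F \<subseteq> (\<Union>s\<in>S. {p \<in> L. x \<le> p \<and> p \<le> s})" unfolding F_def S(3) down_def by auto
    moreover have "finite (\<Union>s\<in>S. {p \<in> L. x \<le> p \<and> p \<le> s})"
      using S(1,2) xL ifin unfolding interval_finite_def by blast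
    ultimately have fF: "finite F" by (rule finite_subset)
    define c where "c k = card {y\<in>\<Gamma> k. x \<le> y}" for k
    have fin: "finite {y\<in>\<Gamma> k. x \<le> y}" for k
      by (rule finite_subset[OF _ fF]) (use dec[of k] in \<open>auto simp: F_def\<close>)
    have lt: "c (Suc k) < c k" for k
    proof -
      obtain m where m: "m \<in> maxel (\<Gamma> k)" "x \<le> m" using maxel_props(3)[OF fg[of k] x[of k]] by blast
      have "{y\<in>\<Gamma> (Suc k). x \<le> y} \<subset> {y\<in>\<Gamma> k. x \<le> y}"
        using m GS[of k] maxel_props(6)[OF fg[of k]] by auto
      then show ?thesis unfolding c_def using fin psubset_card_mono by blast
    qed
    have "c k + k \<le> c 0" for k
    proof (induction k)
      case (Suc k) then show ?case using lt[of k] by simp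
    qed simp
    from this[of "Suc (c 0)"] show False by simp
  qed
  have "exhausting_chain L G \<Gamma>"
    unfolding exhausting_chain_def
    using G0 fg GS inter diff maxel_props(1)[OF fg] by auto
  moreover have "is_generator L (\<Gamma> k) x" if "x \<in> \<Gamma> k - \<Gamma> (Suc k)" for k x
    unfolding is_generator_def generates_def
    using that diff[of k] maxel_props(1,2,4)[OF fg[of k]] by blast
  moreover have "x = y" if "x \<in> \<Gamma> k - \<Gamma> (Suc k)" "y \<in> \<Gamma> k - \<Gamma> (Suc k)" "x \<le> y" for k x y
    using that diff[of k] unfolding maxel_def by (auto simp: order_less_le)
  ultimately show ?thesis by blast
qed

lemma chain_parts:
  assumes "exhausting_chain L G \<Gamma>"
  shows "\<Gamma> 0 = G" "\<And>k. fin_gen_ideal L (\<Gamma> k)" "\<And>k. \<Gamma> (Suc k) \<subseteq> \<Gamma> k"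
    "\<And>k. finite (\<Gamma> k - \<Gamma> (Suc k))" "(\<Inter>k. \<Gamma> k) = {}"
  using assms unfolding exhausting_chain_def by simp_all

lemma fg_down_closed:
  assumes "fin_gen_ideal L A" "x \<in> A" "y \<in> L" "y \<le> x" shows "y \<in> A"
  using assms unfolding fin_gen_ideal_def is_ideal_def by blast

lemma chain_sub:
  assumes "exhausting_chain L G \<Gamma>" shows "\<Gamma> k \<subseteq> G"
proof (induction k)
  case 0 then show ?case using chain_parts(1)[OF assms] by simp
next
  case (Suc k) then show ?case using chain_parts(3)[OF assms, of k] by (rule_tac subset_trans) auto
qed

lemma chain_leave:
  assumes C: "exhausting_chain L G \<Gamma>" and x: "x \<in> G"
  shows "\<exists>k. x \<in> \<Gamma> k \<and> x \<notin> \<Gamma> (Suc k)"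
proof -
  have "x \<notin> (\<Inter>k. \<Gamma> k)" using chain_parts(5)[OF C] by simp
  then have "\<exists>n. x \<notin> \<Gamma> n" by simp
  then have "\<exists>n. x \<notin> \<Gamma> n \<and> (\<forall>m<n. \<not> x \<notin> \<Gamma> m)"
    by (rule exists_least_iff[THEN iffD1])
  then obtain n where n: "x \<notin> \<Gamma> n" and least: "\<And>m. m < n \<Longrightarrow> x \<in> \<Gamma> m"
    by blast
  have "n \<noteq> 0"
  proof
    assume "n = 0" then show False using n x chain_parts(1)[OF C] by simp
  qed
  then obtain k where "n = Suc k" by (cases n) auto
  then show ?thesis using n least by auto
qed

lemma down_fg: "l \<in> L \<Longrightarrow> fin_gen_ideal L (down L l)"
  using union_down_fg[of "{l}" L] by simp

lemma backward:
  fixes L :: "'a::order set"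
  assumes H: "\<forall>G. fin_gen_ideal L G \<longrightarrow> (\<exists>\<Gamma>. exhausting_chain L G \<Gamma>)"
  shows "interval_finite L \<and> good L"
proof -
  have ifin: "interval_finite L"
    unfolding interval_finite_def
  proof (intro ballI)
    fix m l assume m: "m \<in> L" and l: "l \<in> L"
    show "finite {p \<in> L. m \<le> p \<and> p \<le> l}"
    proof (cases "m \<le> l")
      case False
      have "{p \<in> L. m \<le> p \<and> p \<le> l} = {}"
      proof (rule ccontr)
        assume "{p \<in> L. m \<le> p \<and> p \<le> l} \<noteq> {}"
        then obtain p where "m \<le> p" "p \<le> l" by blast
        then have "m \<le> l" by (rule order_trans)
        then show False using False by simp
      qed
      then show ?thesis by (metis finite.emptyI)
    next
      case True
      obtain \<Gamma> where C: "exhausting_chain L (down L l) \<Gamma>" using H down_fg[OF l] by blast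
      have "m \<in> down L l" using True m unfolding down_def by simp
      then obtain k where k: "m \<in> \<Gamma> k" "m \<notin> \<Gamma> (Suc k)" using chain_leave[OF C] by blast
      have "{p \<in> L. m \<le> p \<and> p \<le> l} \<subseteq> (\<Union>j\<le>k. \<Gamma> j - \<Gamma> (Suc j))"
      proof
        fix p assume p: "p \<in> {p \<in> L. m \<le> p \<and> p \<le> l}"
        have notin: "p \<notin> \<Gamma> (Suc k)"
        proof
          assume "p \<in> \<Gamma> (Suc k)"
          then show False using k fg_down_closed[OF chain_parts(2)[OF C], of p "Suc k" m] p m by blast
        qed
        have p0: "p \<in> \<Gamma> 0" using p chain_parts(1)[OF C] unfolding down_def by auto
        have "\<exists>j\<le>k. p \<in> \<Gamma> j \<and> p \<notin> \<Gamma> (Suc j)"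
        proof (rule ccontr)
          assume nn: "\<not> ?thesis"
          have "j \<le> Suc k \<Longrightarrow> p \<in> \<Gamma> j" for j
            by (induction j) (use p0 nn in auto)
          then show False using notin by simp
        qed
        then show "p \<in> (\<Union>j\<le>k. \<Gamma> j - \<Gamma> (Suc j))" by blast
      qed
      moreover have "finite (\<Union>j\<le>k. \<Gamma> j - \<Gamma> (Suc j))" using chain_parts(4)[OF C] by blast
      ultimately show ?thesis by (rule finite_subset)
    qed
  qed
  have g2: "\<exists>l'. is_pred L l' l \<and> m \<le> l'" if m: "m \<in> L" and l: "l \<in> L" and ml: "m < l" for m l
  proof -
    define I where "I = {p \<in> L. m \<le> p \<and> p < l}"
    have "finite I" using ifin m l unfolding interval_finite_def I_def
      by (rule_tac finite_subset[of _ "{p \<in> L. m \<le> p \<and> p \<le> l}"]) auto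
    moreover have "m \<in> I" using m ml unfolding I_def by auto
    ultimately obtain q where q: "q \<in> I" "m \<le> q" "\<forall>b\<in>I. q \<le> b \<longrightarrow> q = b"
      using finite_has_maximal2 by blast
    have qL: "q \<in> L" "q < l" using q(1) unfolding I_def by auto
    have "\<not> (\<exists>p\<in>L. q < p \<and> p < l)"
    proof
      assume "\<exists>p\<in>L. q < p \<and> p < l"
      then obtain p where p: "p \<in> L" "q < p" "p < l" by blast
      then have "m \<le> p" using q(2) by (meson order_less_imp_le order_trans)
      then have "p \<in> I" using p unfolding I_def by blast
      then have "q = p" using q(3) p(2) by (meson order_less_imp_le)
      then show False using p(2) by simp
    qed
    then have "is_pred L q l" unfolding is_pred_def using qL l by blast
    then show ?thesis using q by blast
  qed
  have g1: "finite {m. is_pred L m l}" if l: "l \<in> L" for l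
  proof -
    obtain \<Gamma> where C: "exhausting_chain L (down L l) \<Gamma>" using H down_fg[OF l] by blast
    have "l \<in> down L l" using l unfolding down_def by simp
    then obtain k where k: "l \<in> \<Gamma> k" "l \<notin> \<Gamma> (Suc k)" using chain_leave[OF C] by blast
    obtain S where S: "finite S" "S \<subseteq> L" "\<Gamma> (Suc k) = (\<Union>g\<in>S. down L g)"
      using chain_parts(2)[OF C, of "Suc k"] unfolding fin_gen_ideal_def generates_def by blast
    have sub: "\<Gamma> (Suc k) \<subseteq> down L l" using chain_sub[OF C] .
    have "{m. is_pred L m l} \<subseteq> (\<Gamma> k - \<Gamma> (Suc k)) \<union> S"
    proof
      fix p assume p: "p \<in> {m. is_pred L m l}"
      then have pL: "p \<in> L" "p < l" unfolding is_pred_def by auto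
      have pk: "p \<in> \<Gamma> k" using fg_down_closed[OF chain_parts(2)[OF C] k(1) pL(1)] pL(2) by simp
      show "p \<in> (\<Gamma> k - \<Gamma> (Suc k)) \<union> S"
      proof (cases "p \<in> \<Gamma> (Suc k)")
        case False then show ?thesis using pk by blast
      next
        case True
        then obtain s where s: "s \<in> S" "p \<le> s" using S(3) unfolding down_def by auto
        have "s \<in> \<Gamma> (Suc k)" using s S unfolding down_def by auto
        then have "s \<le> l" "s \<noteq> l" using sub k unfolding down_def by auto
        then have "s < l" by simp
        then have "p = s" using p s S(2) unfolding is_pred_def by (auto simp: order_less_le)
        then show ?thesis using s by blast
      qed
    qed
    moreover have "finite ((\<Gamma> k - \<Gamma> (Suc k)) \<union> S)" using chain_parts(4)[OF C] S(1) by blast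
    ultimately show ?thesis by (rule finite_subset)
  qed
  have c1: "\<forall>l\<in>L. (\<exists>m\<in>L. m < l) \<longrightarrow> (\<exists>m. is_pred L m l) \<and> finite {m. is_pred L m l}"
    using g1 g2 by blast
  have c2: "\<forall>m\<in>L. \<forall>l\<in>L. m < l \<longrightarrow> (\<exists>l'. is_pred L l' l \<and> m \<le> l')"
    using g2 by blast
  have "good L" unfolding good_def using c1 c2 by blast
  then show ?thesis using ifin by blast
qed

theorem proposition2p3:
  fixes L :: "'a::order set"
  shows "((interval_finite L \<and> good L) \<longleftrightarrow>
           (\<forall>G. fin_gen_ideal L G \<longrightarrow> (\<exists>\<Gamma>. exhausting_chain L G \<Gamma>))) \<and>
         (interval_finite L \<and> good L \<longrightarrow>
           (\<forall>G. fin_gen_ideal L G \<longrightarrow>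
             (\<exists>\<Gamma>. exhausting_chain L G \<Gamma> \<and>
                (\<forall>k. (\<forall>x\<in>\<Gamma> k - \<Gamma> (Suc k). is_generator L (\<Gamma> k) x) \<and>
                     (\<forall>x\<in>\<Gamma> k - \<Gamma> (Suc k). \<forall>y\<in>\<Gamma> k - \<Gamma> (Suc k).
                          x \<le> y \<longrightarrow> x = y)))))"
proof (rule conjI)
  show "(interval_finite L \<and> good L) \<longleftrightarrow>
           (\<forall>G. fin_gen_ideal L G \<longrightarrow> (\<exists>\<Gamma>. exhausting_chain L G \<Gamma>))"
  proof (rule iffI)
    assume a: "interval_finite L \<and> good L"
    show "\<forall>G. fin_gen_ideal L G \<longrightarrow> (\<exists>\<Gamma>. exhausting_chain L G \<Gamma>)"
    proof (intro allI impI)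
      fix G assume "fin_gen_ideal L G"
      from forward[OF conjunct1[OF a] conjunct2[OF a] this]
      show "\<exists>\<Gamma>. exhausting_chain L G \<Gamma>" by (elim exE conjE) (erule exI)
    qed
  next
    assume "\<forall>G. fin_gen_ideal L G \<longrightarrow> (\<exists>\<Gamma>. exhausting_chain L G \<Gamma>)"
    then show "interval_finite L \<and> good L" by (rule backward)
  qed
next
  show "interval_finite L \<and> good L \<longrightarrow>
           (\<forall>G. fin_gen_ideal L G \<longrightarrow>
             (\<exists>\<Gamma>. exhausting_chain L G \<Gamma> \<and>
                (\<forall>k. (\<forall>x\<in>\<Gamma> k - \<Gamma> (Suc k). is_generator L (\<Gamma> k) x) \<and>
                     (\<forall>x\<in>\<Gamma> k - \<Gamma> (Suc k). \<forall>y\<in>\<Gamma> k - \<Gamma> (Suc k).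
                          x \<le> y \<longrightarrow> x = y))))"
  proof (intro impI allI)
    fix G assume a: "interval_finite L \<and> good L" and G: "fin_gen_ideal L G"
    show "\<exists>\<Gamma>. exhausting_chain L G \<Gamma> \<and>
                (\<forall>k. (\<forall>x\<in>\<Gamma> k - \<Gamma> (Suc k). is_generator L (\<Gamma> k) x) \<and>
                     (\<forall>x\<in>\<Gamma> k - \<Gamma> (Suc k). \<forall>y\<in>\<Gamma> k - \<Gamma> (Suc k).
                          x \<le> y \<longrightarrow> x = y))"
      by (rule forward[OF conjunct1[OF a] conjunct2[OF a] G])
  qed
qed

end
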